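(* Given an example pair $(x,y)\in\mathcal{X}\times\{\pm1\}$ and a function $\hat h:\mathcal{X}\to\mathbb{R}$, there exists $p^*\in\{0,1\}$ such that $p^*(\hat h(x)y-1)\le\hat y\,y-1$, where $\hat y=\mathbb{E}[\Pi(\hat h(x))]$, the expectation taken only with respect to the randomness of $\Pi$.
   Context: Randomized projection: for $z\in\mathbb{R}$, $\Pi(z)$ is the random label equal to $\mathrm{sign}(z)$ if $|z|\ge1$; otherwise $\Pi(z)=+1$ with probability $\frac{1+z}{2}$ and $-1$ with probability $\frac{1-z}{2}$. *)

theory Defs
  imports "HOL-Probability.Probability"
begin

definition rand_proj :: "real \<Rightarrow> real pmf" where
  "rand_proj z = (if \<bar>z\<bar> \<ge> 1 then return_pmf (sgn z)
                  else map_pmf (\<lambda>b. if b then 1 else -1) (bernoulli_pmf ((1 + z) / 2)))"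

end

theory Submission
  imports Defs
begin

lemma exp_rp: "measure_pmf.expectation (rand_proj z) (\<lambda>t. t) = (if \<bar>z\<bar> \<ge> 1 then sgn z else z)"
proof (cases "\<bar>z\<bar> \<ge> 1")
  case True then show ?thesis by (simp add: rand_proj_def)
next
  case False
  then have "0 \<le> (1 + z) / 2" "(1 + z) / 2 \<le> 1" by auto
  with False show ?thesis
    by (simp add: rand_proj_def integral_map_pmf field_simps)
qed

theorem lemma5:
  fixes h :: "'a \<Rightarrow> real" and x :: 'a and y :: real
  assumes "y \<in> {-1, 1}"
  shows "\<exists>p\<in>{0::real, 1}.
           p * (h x * y - 1) \<le> measure_pmf.expectation (rand_proj (h x)) (\<lambda>t. t) * y - 1"
  unfolding exp_rp using assms
  by (cases "h x \<ge> 1"; cases "h x \<le> -1"; auto simp: sgn_if)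

end
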